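(* Let $\mathbb A=(A_n)_{n\in\mathbb Z^+}$ be a sequence of invertible linear operators on $\mathbb R^d$ and $\mathcal S=\{\|\cdot\|_n;\ n\in\mathbb Z^+\}$ a sequence of norms such that there exist $K,a>0$ with $\|\mathcal A(m,n)x\|_m\le Ke^{a(m-n)}\|x\|_n$ and $\|\mathcal A(n,m)x\|_n\le Ke^{a(m-n)}\|x\|_m$ for all $m\ge n$, $x$. Let $\Sigma=\Sigma_{ED,\mathbb A,\mathcal S}$. Then: (i) for all sufficiently large $r>0$, $r\notin\Sigma$ and $S_r(n)=\mathbb R^d$ for all $n\in\mathbb Z^+$; (ii) for all sufficiently small $r>0$, $r\notin\Sigma$ and $S_r(n)=\{0\}$ for all $n\in\mathbb Z^+$.
   Context: $\mathbb Z^+=\{0,1,\dots\}$. $\mathcal A(m,n)=A_{m-1}\cdots A_n$ ($m>n$), $\mathrm{Id}$ ($m=n$), $A_m^{-1}\cdots A_{n-1}^{-1}$ ($m<n$). For $r>0$, $n\in\mathbb Z^+$: $S_r(n)=\{v\in\mathbb R^d:\ \sup_{m\ge n}r^{-(m-n)}\|\mathcal A(m,n)v\|_m<+\infty\}$. A sequence $(C_n)_{n\in\mathbb Z^+}$ with cocycle $\mathcal C$ admits a strong exponential dichotomy w.r.t. $\mathcal S$ if there exist $K>0$, $a\ge\lambda>0$ and projections $P_n$ (possibly $\mathrm{Id}$ or $0$) with $C_nP_n=P_{n+1}C_n$ such that for $m\ge n$, $x$, $Q_m=\mathrm{Id}-P_m$: $\|\mathcal C(m,n)P_nx\|_m\le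 Ke^{-\lambda(m-n)}\|x\|_n$, $\|\mathcal C(n,m)Q_mx\|_n\le Ke^{-\lambda(m-n)}\|x\|_m$, $\|\mathcal C(m,n)x\|_m\le Ke^{a(m-n)}\|x\|_n$, $\|\mathcal C(n,m)x\|_n\le Ke^{a(m-n)}\|x\|_m$. $\Sigma_{ED,\mathbb A,\mathcal S}$: set of $\tau>0$ such that $(\tau^{-1}A_n)_{n\in\mathbb Z^+}$ does not admit a strong exponential dichotomy w.r.t. $\mathcal S$. *)

theory Defs
  imports "HOL-Analysis.Analysis"
begin

type_synonym 'd mat = "real ^ 'd ^ 'd"

primrec fwd :: "(nat \<Rightarrow> 'd::finite mat) \<Rightarrow> nat \<Rightarrow> nat \<Rightarrow> 'd mat" where
  "fwd A n 0 = mat 1"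
| "fwd A n (Suc k) = A (n + k) ** fwd A n k"

primrec bwd :: "(nat \<Rightarrow> 'd::finite mat) \<Rightarrow> nat \<Rightarrow> nat \<Rightarrow> 'd mat" where
  "bwd A n 0 = mat 1"
| "bwd A n (Suc k) = bwd A n k ** matrix_inv (A (n + k))"

definition cocycle :: "(nat \<Rightarrow> 'd::finite mat) \<Rightarrow> nat \<Rightarrow> nat \<Rightarrow> 'd mat" where
  "cocycle A m n = (if n \<le> m then fwd A n (m - n) else bwd A m (n - m))"

definition is_norm :: "(real ^ 'd::finite \<Rightarrow> real) \<Rightarrow> bool" where
  "is_norm N \<longleftrightarrow> (\<forall>x. N x \<ge> 0) \<and> (\<forall>x. N x = 0 \<longleftrightarrow> x = 0)
     \<and> (\<forall>c x. N (c *\<^sub>R x) = \<bar>c\<bar> * N x) \<and> (\<forall>x y. N (x + y) \<le> N x + N y)"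

definition S_r :: "(nat \<Rightarrow> 'd::finite mat) \<Rightarrow> (nat \<Rightarrow> real ^ 'd \<Rightarrow> real) \<Rightarrow> real \<Rightarrow> nat \<Rightarrow> (real ^ 'd) set" where
  "S_r A N r n = {v. \<exists>B. \<forall>m\<ge>n. (inverse r) ^ (m - n) * N m (cocycle A m n *v v) \<le> B}"

definition strong_ED :: "(nat \<Rightarrow> 'd::finite mat) \<Rightarrow> (nat \<Rightarrow> real ^ 'd \<Rightarrow> real) \<Rightarrow> bool" where
  "strong_ED C N \<longleftrightarrow> (\<exists>K a lam P. K > 0 \<and> lam > 0 \<and> a \<ge> lam \<and>
     (\<forall>n. P n ** P n = P n) \<and> (\<forall>n. C n ** P n = P (Suc n) ** C n) \<and>
     (\<forall>m n x. n \<le> m \<longrightarrow>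
        N m (cocycle C m n *v (P n *v x)) \<le> K * exp (- lam * real (m - n)) * N n x \<and>
        N n (cocycle C n m *v ((mat 1 - P m) *v x)) \<le> K * exp (- lam * real (m - n)) * N m x \<and>
        N m (cocycle C m n *v x) \<le> K * exp (a * real (m - n)) * N n x \<and>
        N n (cocycle C n m *v x) \<le> K * exp (a * real (m - n)) * N m x))"

definition Sigma_ED :: "(nat \<Rightarrow> 'd::finite mat) \<Rightarrow> (nat \<Rightarrow> real ^ 'd \<Rightarrow> real) \<Rightarrow> real set" where
  "Sigma_ED A N = {\<tau>. \<tau> > 0 \<and> \<not> strong_ED (\<lambda>n. inverse \<tau> *\<^sub>R A n) N}"

end

theory Submission imports Defs begin

lemma minv_l: fixes M :: "real^'d^'d" assumes "invertible M" shows "matrix_inv M ** M = mat 1"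
  using someI_ex[OF assms[unfolded invertible_def]] unfolding matrix_inv_def by blast
lemma minv_r: fixes M :: "real^'d^'d" assumes "invertible M" shows "M ** matrix_inv M = mat 1"
  using someI_ex[OF assms[unfolded invertible_def]] unfolding matrix_inv_def by blast

lemma minv_scale: fixes M :: "real^'d^'d" assumes "invertible M" "c \<noteq> 0"
  shows "matrix_inv (c *\<^sub>R M) = inverse c *\<^sub>R matrix_inv M"
proof -
  have i: "invertible (c *\<^sub>R M)" using assms scalar_invertible by blast
  have "(c *\<^sub>R M) ** (inverse c *\<^sub>R matrix_inv M) = mat 1"
    using assms by (simp add: matrix_scalar_ac minv_r flip: scalar_matrix_assoc)
  hence "matrix_inv (c *\<^sub>R M) = matrix_inv (c *\<^sub>R M) ** ((c *\<^sub>R M) ** (inverse c *\<^sub>R matrix_inv M))"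
    by simp
  also have "\<dots> = (matrix_inv (c *\<^sub>R M) ** (c *\<^sub>R M)) ** (inverse c *\<^sub>R matrix_inv M)"
    by (simp only: matrix_mul_assoc)
  finally have "matrix_inv (c *\<^sub>R M) = (matrix_inv (c *\<^sub>R M) ** (c *\<^sub>R M)) ** (inverse c *\<^sub>R matrix_inv M)" .
  thus ?thesis using minv_l[OF i] by simp
qed

lemma bwd_fwd: assumes "\<And>n. invertible (A n)" shows "bwd A n k ** fwd A n k = mat 1"
proof (induction k)
  case 0 then show ?case by simp
next
  case (Suc k)
  have "bwd A n (Suc k) ** fwd A n (Suc k) = bwd A n k ** (matrix_inv (A (n+k)) ** A (n+k)) ** fwd A n k"
    by (simp add: matrix_mul_assoc)
  then show ?case using Suc minv_l[OF assms] by simp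
qed

lemma fwd_scale: "fwd (\<lambda>n. c *\<^sub>R A n) n k = c ^ k *\<^sub>R fwd A n k"
  by (induction k) (simp_all add: matrix_scalar_ac flip: scalar_matrix_assoc)

lemma bwd_scale: assumes "\<And>n. invertible (A n)" "c \<noteq> 0"
  shows "bwd (\<lambda>n. c *\<^sub>R A n) n k = inverse c ^ k *\<^sub>R bwd A n k"
  by (induction k) (simp_all add: minv_scale assms matrix_scalar_ac mult.commute flip: scalar_matrix_assoc)

lemma coc_fwd: assumes "n \<le> m" shows "cocycle (\<lambda>n. c *\<^sub>R A n) m n = c ^ (m-n) *\<^sub>R cocycle A m n"
  using assms by (simp add: cocycle_def fwd_scale)

lemma coc_bwd: assumes "\<And>n. invertible (A n)" "c \<noteq> 0" "n \<le> m"
  shows "cocycle (\<lambda>n. c *\<^sub>R A n) n m = inverse c ^ (m-n) *\<^sub>R cocycle A n m"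
  using assms by (auto simp add: cocycle_def bwd_scale)

lemma exp_pow: "r > 0 \<Longrightarrow> r ^ k = exp (ln r * real k)"
  by (metis exp_ln exp_of_nat_mult mult.commute)

lemma nz: "is_norm N \<Longrightarrow> N 0 = 0" unfolding is_norm_def by blast
lemma nnn: "is_norm N \<Longrightarrow> N x \<ge> 0" unfolding is_norm_def by blast
lemma npos: "is_norm N \<Longrightarrow> x \<noteq> 0 \<Longrightarrow> N x > 0" unfolding is_norm_def
  by (metis order_le_less)
lemma nsc: "is_norm N \<Longrightarrow> N (c *\<^sub>R x) = \<bar>c\<bar> * N x" unfolding is_norm_def by blast

lemma cocf: fixes A :: "nat \<Rightarrow> real^'d^'d"
  assumes "\<tau> > 0" "n \<le> m" "is_norm Nm"
  shows "Nm (cocycle (\<lambda>n. inverse \<tau> *\<^sub>R A n) m n *v x) = inverse \<tau> ^ (m-n) * Nm (cocycle A m n *v x)"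
  using assms by (simp add: coc_fwd nsc flip: scaleR_matrix_vector_assoc)

lemma cocb: fixes A :: "nat \<Rightarrow> real^'d^'d"
  assumes "\<And>n. invertible (A n)" "\<tau> > 0" "n \<le> m" "is_norm Nn"
  shows "Nn (cocycle (\<lambda>n. inverse \<tau> *\<^sub>R A n) n m *v x) = \<tau> ^ (m-n) * Nn (cocycle A n m *v x)"
proof -
  have "cocycle (\<lambda>n. inverse \<tau> *\<^sub>R A n) n m = inverse (inverse \<tau>) ^ (m-n) *\<^sub>R cocycle A n m"
    by (rule coc_bwd) (use assms in auto)
  then show ?thesis using assms by (simp add: nsc flip: scaleR_matrix_vector_assoc)
qed

lemma coc_inv: assumes "\<And>n. invertible (A n)" "n \<le> m"
  shows "cocycle A n m ** cocycle A m n = mat 1"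
proof -
  have "cocycle A n m = bwd A n (m-n)" using assms by (cases "m = n") (auto simp: cocycle_def)
  moreover have "cocycle A m n = fwd A n (m-n)" using assms by (simp add: cocycle_def)
  ultimately show ?thesis using bwd_fwd[OF assms(1)] by simp
qed


theorem lemma7p4:
  fixes A :: "nat \<Rightarrow> real ^ 'd ^ 'd" and N :: "nat \<Rightarrow> real ^ 'd \<Rightarrow> real"
  assumes inv: "\<And>n. invertible (A n)"
    and norms: "\<And>n. is_norm (N n)"
    and K: "K > 0" and a: "a > 0"
    and growth: "\<And>m n x. n \<le> m \<Longrightarrow> N m (cocycle A m n *v x) \<le> K * exp (a * real (m - n)) * N n x"
    and growth': "\<And>m n x. n \<le> m \<Longrightarrow> N n (cocycle A n m *v x) \<le> K * exp (a * real (m - n)) * N m x"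
  shows "(\<exists>R>0. \<forall>r>R. r \<notin> Sigma_ED A N \<and> (\<forall>n. S_r A N r n = UNIV))
       \<and> (\<exists>\<epsilon>>0. \<forall>r. 0 < r \<and> r < \<epsilon> \<longrightarrow> r \<notin> Sigma_ED A N \<and> (\<forall>n. S_r A N r n = {0}))"
proof
  have ipow: "inverse r ^ k = exp (- ln r * real k)" if "r > 0" for r :: real and k
    using exp_pow[of "inverse r" k] that by (simp add: ln_inverse)
  have pow: "r ^ k = exp (ln r * real k)" if "r > 0" for r :: real and k
    using exp_pow[of r k] that by simp
  show "\<exists>R>0. \<forall>r>R. r \<notin> Sigma_ED A N \<and> (\<forall>n. S_r A N r n = UNIV)"
  proof (intro exI[of _ "exp (a + 1)"] conjI allI impI)
    show "exp (a+1) > 0" by simp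
    fix r assume r: "r > exp (a+1)"
    hence r0: "r > 0" by (meson exp_gt_zero less_trans)
    have lr: "ln r > a + 1" using r r0 by (metis exp_gt_zero ln_exp ln_less_cancel_iff)
    have b1: "inverse r ^ (m-n) * N m (cocycle A m n *v x) \<le> K * exp (- (ln r - a) * real (m - n)) * N n x"
      if "n \<le> m" for m n x
    proof -
      have "inverse r ^ (m-n) * N m (cocycle A m n *v x) \<le> inverse r ^ (m-n) * (K * exp (a * real (m - n)) * N n x)"
        using growth[OF that] r0 by (intro mult_left_mono) auto
      also have "\<dots> = K * exp (- (ln r - a) * real (m - n)) * N n x"
        using r0 by (simp add: ipow exp_add[symmetric] algebra_simps)
      finally show ?thesis .
    qed
    show "S_r A N r n = UNIV" for n
    proof -
      have "v \<in> S_r A N r n" for v unfolding S_r_def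
      proof (intro CollectI exI[of _ "K * N n v"] allI impI)
        fix m assume nm: "n \<le> m"
        have "exp (- (ln r - a) * real (m - n)) \<le> 1" using lr by (simp add: mult_nonpos_nonneg)
        hence "K * exp (- (ln r - a) * real (m - n)) * N n v \<le> K * 1 * N n v"
          using K nnn[OF norms] by (intro mult_right_mono mult_left_mono) auto
        thus "inverse r ^ (m - n) * N m (cocycle A m n *v v) \<le> K * N n v" using b1[OF nm, of v] by simp
      qed
      thus "S_r A N r n = UNIV" by blast
    qed
    have "strong_ED (\<lambda>n. inverse r *\<^sub>R A n) N" unfolding strong_ED_def
    proof (rule exI[of _ K], rule exI[of _ "ln r + a"], rule exI[of _ "ln r - a"], rule exI[of _ "\<lambda>_. mat 1"], intro conjI allI impI)
      show "0 < K" by (rule K)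
      fix n show "(mat 1 :: real^'d^'d) ** mat 1 = mat 1" "inverse r *\<^sub>R A n ** mat 1 = mat 1 ** (inverse r *\<^sub>R A n)" by simp_all
    next
      show "0 < ln r - a" "ln r - a \<le> ln r + a" using lr a by auto
      fix m n :: nat and x assume nm: "n \<le> m"
      show "N m (cocycle (\<lambda>n. inverse r *\<^sub>R A n) m n *v (mat 1 *v x)) \<le> K * exp (- (ln r - a) * real (m - n)) * N n x"
        using cocf[OF r0 nm norms] b1[OF nm] by simp
      show "N n (cocycle (\<lambda>n. inverse r *\<^sub>R A n) n m *v ((mat 1 - mat 1) *v x)) \<le> K * exp (- (ln r - a) * real (m - n)) * N m x"
        using nz[OF norms] nnn[OF norms] K by simp
      show "N m (cocycle (\<lambda>n. inverse r *\<^sub>R A n) m n *v x) \<le> K * exp ((ln r + a) * real (m - n)) * N n x"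
      proof -
        have "exp (- (ln r - a) * real (m - n)) \<le> exp ((ln r + a) * real (m - n))"
          using lr a by (intro exp_mono mult_right_mono) auto
        hence "K * exp (- (ln r - a) * real (m - n)) * N n x \<le> K * exp ((ln r + a) * real (m - n)) * N n x"
          using K nnn[OF norms] by (intro mult_right_mono mult_left_mono) auto
        thus ?thesis using cocf[OF r0 nm norms[of m], of A x] b1[OF nm, of x] by linarith
      qed
      show "N n (cocycle (\<lambda>n. inverse r *\<^sub>R A n) n m *v x) \<le> K * exp ((ln r + a) * real (m - n)) * N m x"
      proof -
        have "r ^ (m-n) * N n (cocycle A n m *v x) \<le> r ^ (m-n) * (K * exp (a * real (m - n)) * N m x)"
          using growth'[OF nm] r0 by (intro mult_left_mono) auto
        also have "\<dots> = K * exp ((ln r + a) * real (m - n)) * N m x"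
          using r0 by (simp add: pow exp_add[symmetric] algebra_simps)
        finally show ?thesis using cocb[OF inv r0 nm norms] by simp
      qed
    qed
    thus "r \<notin> Sigma_ED A N" by (simp add: Sigma_ED_def)
  qed
  show "\<exists>\<epsilon>>0. \<forall>r. 0 < r \<and> r < \<epsilon> \<longrightarrow> r \<notin> Sigma_ED A N \<and> (\<forall>n. S_r A N r n = {0})"
  proof (intro exI[of _ "exp (- a - 1)"] conjI allI impI)
    show "exp (-a-1) > 0" by simp
    fix r assume "0 < r \<and> r < exp (- a - 1)"
    hence r0: "r > 0" and r: "r < exp (-a-1)" by auto
    have lr: "ln r < - a - 1" using r r0 by (metis ln_exp ln_less_cancel_iff exp_gt_zero)
    have b1: "inverse r ^ (m-n) * N m (cocycle A m n *v x) \<le> K * exp ((a - ln r) * real (m - n)) * N n x"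
      if "n \<le> m" for m n x
    proof -
      have "inverse r ^ (m-n) * N m (cocycle A m n *v x) \<le> inverse r ^ (m-n) * (K * exp (a * real (m - n)) * N n x)"
        using growth[OF that] r0 by (intro mult_left_mono) auto
      also have "\<dots> = K * exp ((a - ln r) * real (m - n)) * N n x"
        using r0 by (simp add: ipow exp_add[symmetric] algebra_simps)
      finally show ?thesis .
    qed
    have b2: "r ^ (m-n) * N n (cocycle A n m *v x) \<le> K * exp (- (- ln r - a) * real (m - n)) * N m x"
      if nm: "n \<le> m" for m n x
    proof -
      have "r ^ (m-n) * N n (cocycle A n m *v x) \<le> r ^ (m-n) * (K * exp (a * real (m - n)) * N m x)"
        using growth'[OF nm] r0 by (intro mult_left_mono) auto
      also have "\<dots> = K * exp (- (- ln r - a) * real (m - n)) * N m x"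
        using r0 by (simp add: pow exp_add[symmetric] algebra_simps)
      finally show ?thesis .
    qed
    show "S_r A N r n = {0}" for n
    proof (intro equalityI subsetI)
      fix v assume v: "v \<in> S_r A N r n"
      then obtain B where B: "\<And>m. m \<ge> n \<Longrightarrow> inverse r ^ (m - n) * N m (cocycle A m n *v v) \<le> B"
        unfolding S_r_def by blast
      show "v \<in> {0}"
      proof (rule ccontr)
        assume "v \<notin> {0}"
        hence vp: "N n v > 0" using npos[OF norms] by auto
        obtain k :: nat where k: "B * K / N n v < real k" using reals_Archimedean2 by blast
        define m where "m = n + k"
        have nm: "n \<le> m" and mk: "m - n = k" unfolding m_def by auto
        have "N n v = N n (cocycle A n m *v (cocycle A m n *v v))"
          using coc_inv[OF inv nm] by (simp add: matrix_vector_mul_assoc)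
        also have "\<dots> \<le> K * exp (a * real k) * N m (cocycle A m n *v v)"
          using growth'[OF nm] mk by simp
        finally have e1: "N n v \<le> K * exp (a * real k) * N m (cocycle A m n *v v)" .
        have "exp ((- ln r - a) * real k) \<ge> 1 + (- ln r - a) * real k" by (rule exp_ge_add_one_self)
        moreover have "(- ln r - a) * real k \<ge> real k" using lr mult_right_mono[of 1 "- ln r - a" "real k"] by simp
        ultimately have e2: "exp ((- ln r - a) * real k) \<ge> 1 + real k" by linarith
        have "exp ((- ln r - a) * real k) * N n v = inverse r ^ k * exp (- (a * real k)) * N n v"
          using r0 by (simp add: ipow exp_add[symmetric] algebra_simps)
        also have "\<dots> \<le> inverse r ^ k * exp (- (a * real k)) * (K * exp (a * real k) * N m (cocycle A m n *v v))"
          using e1 r0 by (intro mult_left_mono) auto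
        also have "\<dots> = K * (inverse r ^ k * N m (cocycle A m n *v v))"
          by (simp add: exp_minus field_simps)
        also have "\<dots> \<le> K * B" using B[OF nm] mk K by (intro mult_left_mono) auto
        finally have e3: "exp ((- ln r - a) * real k) * N n v \<le> K * B" .
        have "(1 + real k) * N n v \<le> exp ((- ln r - a) * real k) * N n v"
          using e2 vp by (intro mult_right_mono) auto
        moreover have "B * K < real k * N n v" using k vp by (simp add: divide_less_eq)
        ultimately show False using e3 vp by (simp add: algebra_simps)
      qed
    next
      fix v assume "v \<in> {0::real^'d}"
      then show "v \<in> S_r A N r n" unfolding S_r_def using nz[OF norms] by auto
    qed
    have "strong_ED (\<lambda>n. inverse r *\<^sub>R A n) N" unfolding strong_ED_def
    proof (rule exI[of _ K], rule exI[of _ "a - ln r"], rule exI[of _ "- ln r - a"], rule exI[of _ "\<lambda>_. 0"], intro conjI allI impI)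
      show "0 < K" by (rule K)
      fix n show "(0 :: real^'d^'d) ** 0 = 0" "inverse r *\<^sub>R A n ** 0 = 0 ** (inverse r *\<^sub>R A n)" by simp_all
    next
      show "0 < - ln r - a" "- ln r - a \<le> a - ln r" using lr a by auto
      fix m n :: nat and x assume nm: "n \<le> m"
      show "N m (cocycle (\<lambda>n. inverse r *\<^sub>R A n) m n *v (0 *v x)) \<le> K * exp (- (- ln r - a) * real (m - n)) * N n x"
        using nz[OF norms] nnn[OF norms] K by simp
      show "N n (cocycle (\<lambda>n. inverse r *\<^sub>R A n) n m *v ((mat 1 - 0) *v x)) \<le> K * exp (- (- ln r - a) * real (m - n)) * N m x"
        using cocb[OF inv r0 nm norms] b2[OF nm] by simp
      show "N m (cocycle (\<lambda>n. inverse r *\<^sub>R A n) m n *v x) \<le> K * exp ((a - ln r) * real (m - n)) * N n x"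
        using cocf[OF r0 nm norms] b1[OF nm] by simp
      show "N n (cocycle (\<lambda>n. inverse r *\<^sub>R A n) n m *v x) \<le> K * exp ((a - ln r) * real (m - n)) * N m x"
      proof -
        have "exp (- (- ln r - a) * real (m - n)) \<le> exp ((a - ln r) * real (m - n))"
          using lr a by (intro exp_mono mult_right_mono) auto
        hence "K * exp (- (- ln r - a) * real (m - n)) * N m x \<le> K * exp ((a - ln r) * real (m - n)) * N m x"
          using K nnn[OF norms] by (intro mult_right_mono mult_left_mono) auto
        thus ?thesis using cocb[of A r n m "N n" x, OF inv r0 nm norms] b2[OF nm, of x] by linarith
      qed
    qed
    thus "r \<notin> Sigma_ED A N" by (simp add: Sigma_ED_def)
  qed
qed

end
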